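(* Let $0<q<1$ and $m,n\in\mathbb N_0$. Then the Rodrigues-type formula $$H_{m,n}(z_1,z_2|q)=\frac{(1-1/q)^{m+n}q^{mn}}{(qz_1z_2;q)_\infty}\,D_{q^{-1},z_2}^m D_{q^{-1},z_1}^n\big((qz_1z_2;q)_\infty\big)$$ holds, and consequently the raising relations $$H_{m+1,n}(z_1,z_2|q)=q^n\frac{1-1/q}{(qz_1z_2;q)_\infty}D_{q^{-1},z_2}\Big((qz_1z_2;q)_\infty H_{m,n}(z_1,z_2|q)\Big),$$ $$H_{m,n+1}(z_1,z_2|q)=q^m\frac{1-1/q}{(qz_1z_2;q)_\infty}D_{q^{-1},z_1}\Big((qz_1z_2;q)_\infty H_{m,n}(z_1,z_2|q)\Big)$$ hold.
   Context: Let $0<q<1$. $(a;q)_n=\prod_{j=0}^{n-1}(1-aq^j)$, $(a;q)_\infty=\prod_{j\ge0}(1-aq^j)$, $\left[{m\atop k}\right]_q=\frac{(q;q)_m}{(q;q)_k(q;q)_{m-k}}$, $m\wedge n=\min\{m,n\}$. For $p\in\{q,q^{-1}\}$ the operator $D_{p,z}$ acts on functions of $z$ by $(D_{p,z}f)(z)=\frac{f(z)-f(pz)}{(1-p)z}$. The first $q$-$2D$-Hermite polynomials are $$H_{m,n}(z_1,z_2|q)=\sum_{k=0}^{m\wedge n}\left[{m\atop k}\right]_q\left[{n\atop k}\right]_q(-1)^kq^{\binom k2}(q;q)_k\,z_1^{m-k}z_2^{n-k}.$$ *)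

theory Defs
  imports "HOL-Analysis.Analysis"
begin

definition qpoch :: "complex \<Rightarrow> complex \<Rightarrow> nat \<Rightarrow> complex" where
  "qpoch a q n = (\<Prod>j<n. 1 - a * q ^ j)"

definition qpoch_inf :: "complex \<Rightarrow> complex \<Rightarrow> complex" where
  "qpoch_inf a q = (\<Prod>j. 1 - a * q ^ j)"

definition qbinom :: "complex \<Rightarrow> nat \<Rightarrow> nat \<Rightarrow> complex" where
  "qbinom q m k = qpoch q q m / (qpoch q q k * qpoch q q (m - k))"

definition H2 :: "nat \<Rightarrow> nat \<Rightarrow> complex \<Rightarrow> complex \<Rightarrow> complex \<Rightarrow> complex" where
  "H2 m n z1 z2 q = (\<Sum>k\<le>min m n. qbinom q m k * qbinom q n k * (-1) ^ k
       * q ^ (k choose 2) * qpoch q q k * z1 ^ (m - k) * z2 ^ (n - k))"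

definition D1 :: "complex \<Rightarrow> (complex \<Rightarrow> complex \<Rightarrow> complex) \<Rightarrow> complex \<Rightarrow> complex \<Rightarrow> complex" where
  "D1 p F = (\<lambda>z1 z2. (F z1 z2 - F (p * z1) z2) / ((1 - p) * z1))"

definition D2 :: "complex \<Rightarrow> (complex \<Rightarrow> complex \<Rightarrow> complex) \<Rightarrow> complex \<Rightarrow> complex \<Rightarrow> complex" where
  "D2 p F = (\<lambda>z1 z2. (F z1 z2 - F z1 (p * z2)) / ((1 - p) * z2))"

end

theory Submission
  imports Defs
begin

lemma qpoch_inf_shift:
  fixes Q x :: complex
  assumes "norm Q < 1"
  shows "qpoch_inf x Q = (1 - x) * qpoch_inf (Q * x) Q"
proof -
  define f where "f = (\<lambda>j. 1 - x * Q ^ j)"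
  define g where "g = (\<lambda>n. 1 - (Q*x) * Q ^ n)"
  have "summable (\<lambda>n. norm (Q*x) * norm Q ^ n)"
    by (intro summable_mult summable_geometric) (use assms in simp)
  then have "summable (\<lambda>n. norm (g n - 1))" by (simp add: g_def norm_mult norm_power)
  then have "abs_convergent_prod g"
    by (rule summable_imp_abs_convergent_prod)
  then have "convergent_prod g"
    by (rule abs_convergent_prod_imp_convergent_prod)
  then have "g has_prod (prodinf g)" by (rule convergent_prod_has_prod)
  moreover have "g = (\<lambda>n. f (Suc n))"
    by (simp add: g_def f_def fun_eq_iff algebra_simps)
  ultimately have "(\<lambda>n. f (Suc n)) has_prod (prodinf g)" by simp
  then have "f has_prod (prodinf g * f 0)" by (rule has_prod_Suc_imp)
  then have "prodinf f = prodinf g * f 0"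
    by (rule has_prod_unique[symmetric])
  then show ?thesis by (simp add: qpoch_inf_def g_def f_def mult.commute)
qed

lemma qpoch_Suc: "qpoch a q (Suc n) = qpoch a q n * (1 - a * q ^ n)"
  by (simp add: qpoch_def)

lemma qpoch_0[simp]: "qpoch a q 0 = 1"
  by (simp add: qpoch_def)

definition qb :: "complex \<Rightarrow> nat \<Rightarrow> nat \<Rightarrow> complex" where
  "qb q n k = (if k \<le> n then qbinom q n k else 0)"

lemma aux1: fixes A a b u v :: complex
  assumes "a\<noteq>0" "b\<noteq>0" "u\<noteq>0" "v\<noteq>0"
  shows "A*(1-(1-u)*(1-v))/((a*u)*(b* v)) = A/(a*(b* v)) + (1-u)*(A/((a*u)*b))"
  using assms by (simp add: field_simps)

lemma aux2: fixes A a b u v z :: complex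
  assumes "a\<noteq>0" "b\<noteq>0" "u\<noteq>0" "v\<noteq>0"
  shows "A / (a * (b* v)) * (z * (1-v) - z) = - (z * (1 - (1-u)) * (A / ((a*u) * b)))"
  using assms by (simp add: field_simps)

lemma qb_0:
  assumes "\<And>j. qpoch q q j \<noteq> 0"
  shows "qb q n 0 = 1"
  using assms[of n] by (simp add: qb_def qbinom_def)

lemma qb_pascal:
  assumes nz: "\<And>j. qpoch q q j \<noteq> 0"
  shows "qb q (Suc n) (Suc k) = qb q n k + q ^ Suc k * qb q n (Suc k)"
proof (cases "k \<le> n")
  case False then show ?thesis by (simp add: qb_def)
next
  case True
  show ?thesis
  proof (cases "k = n")
    case True
    then show ?thesis using nz[of n] nz[of "Suc n"] by (simp add: qb_def qbinom_def)
  next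
    case False
    with \<open>k \<le> n\<close> obtain d where n: "n = Suc k + d" by (metis le_Suc_ex le_neq_implies_less less_eq_Suc_le)
    have h1: "Suc (Suc k + d) - Suc k = Suc d" by simp
    have h2: "Suc k + d - k = Suc d" by simp
    have h3: "Suc k + d - Suc k = d" by simp
    have a: "qpoch q q (Suc k + d) \<noteq> 0" "qpoch q q k \<noteq> 0" "qpoch q q d \<noteq> 0"
      using nz by auto
    have b: "1 - q * q ^ k \<noteq> 0" "1 - q * q^d \<noteq> 0"
      using nz[of "Suc k"] nz[of "Suc d"] by (auto simp: qpoch_Suc)
    have e: "q * q ^ (Suc k + d) = (q * q^k) * (q * q^d)" by (simp add: power_add)
    define A where "A = qpoch q q (Suc k + d)"
    define a1 where "a1 = qpoch q q k"
    define b1 where "b1 = qpoch q q d"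
    define u where "u = 1 - q*q^k"
    define v where "v = 1 - q*q^d"
    have qk: "q ^ Suc k = 1 - u" by (simp add: u_def)
    have 1: "qb q (Suc n) (Suc k) = A*(1-(1-u)*(1-v)) / ((a1*u)*(b1* v))"
      unfolding qb_def qbinom_def n A_def a1_def b1_def u_def v_def by (simp only: h1 qpoch_Suc) (simp add: e power_add)
    have 2: "qb q n k = A / (a1 * (b1* v))"
      unfolding qb_def qbinom_def n A_def a1_def b1_def v_def by (simp only: h2 qpoch_Suc) simp
    have 3: "qb q n (Suc k) = A / ((a1*u) * b1)"
      unfolding qb_def qbinom_def n A_def a1_def b1_def u_def by (simp only: h3 qpoch_Suc) simp
    have "a1 \<noteq> 0" "b1 \<noteq> 0" "u \<noteq> 0" "v \<noteq> 0" using a b a1_def b1_def u_def v_def by auto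
    then show ?thesis unfolding 1 2 3 qk by (rule aux1)
  qed
qed

lemma qb_ratio:
  assumes nz: "\<And>j. qpoch q q j \<noteq> 0"
  shows "qb q m k * (q ^ m - q ^ k) = - (q ^ k * (1 - q ^ Suc k) * qb q m (Suc k))"
proof (cases "k < m")
  case False
  then have z: "qb q m (Suc k) = 0" by (simp add: qb_def)
  have "qb q m k * (q ^ m - q ^ k) = 0"
  proof (cases "k = m")
    case False
    with \<open>\<not> k < m\<close> have "qb q m k = 0" by (simp add: qb_def)
    then show ?thesis by simp
  qed simp
  with z show ?thesis by simp
next
  case True
  then obtain e where m: "m = Suc k + e" using less_iff_Suc_add by blast
  have h2: "Suc k + e - k = Suc e" by simp
  have h3: "Suc k + e - Suc k = e" by simp
  have a: "qpoch q q (Suc k + e) \<noteq> 0" "qpoch q q k \<noteq> 0" "qpoch q q e \<noteq> 0"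
    using nz by auto
  have b: "1 - q * q ^ k \<noteq> 0" "1 - q * q^e \<noteq> 0"
    using nz[of "Suc k"] nz[of "Suc e"] by (auto simp: qpoch_Suc)
  define A where "A = qpoch q q (Suc k + e)"
  define a1 where "a1 = qpoch q q k"
  define b1 where "b1 = qpoch q q e"
  define u where "u = 1 - q*q^k"
  define v where "v = 1 - q*q^e"
  have 2: "qb q m k = A / (a1 * (b1* v))"
    unfolding qb_def qbinom_def m A_def a1_def b1_def v_def by (simp only: h2 qpoch_Suc) simp
  have 3: "qb q m (Suc k) = A / ((a1*u) * b1)"
    unfolding qb_def qbinom_def m A_def a1_def b1_def u_def by (simp only: h3 qpoch_Suc) simp
  have e: "q ^ m = q^k * (1-v)" by (simp add: m power_add v_def)
  have qk: "q ^ Suc k = 1 - u" by (simp add: u_def)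
  have "a1 \<noteq> 0" "b1 \<noteq> 0" using a unfolding a1_def b1_def by auto
  moreover have "u \<noteq> 0" "v \<noteq> 0" using b unfolding u_def v_def by auto
  ultimately have X: "A / (a1 * (b1* v)) * (q^k * (1-v) - q^k) = - (q^k * (1 - (1-u)) * (A / ((a1*u) * b1)))"
    by (rule aux2)
  show ?thesis by (simp only: 2 3 e qk X)
qed


definition cc :: "complex \<Rightarrow> nat \<Rightarrow> nat \<Rightarrow> nat \<Rightarrow> complex" where
  "cc q m n k = qb q m k * qb q n k * (-1) ^ k * q ^ (k choose 2) * qpoch q q k"

lemma cc_zero: "\<not> (k \<le> m \<and> k \<le> n) \<Longrightarrow> cc q m n k = 0"
  by (auto simp: cc_def qb_def)

lemma cc_0: assumes "\<And>j. qpoch q q j \<noteq> 0" shows "cc q m n 0 = 1"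
  using qb_0[OF assms] by (simp add: cc_def binomial_eq_0)

lemma H2_cc:
  assumes "n \<le> N"
  shows "H2 m n z1 z2 q = (\<Sum>k\<le>N. cc q m n k * z1^(m-k) * z2^(n-k))"
proof -
  have "H2 m n z1 z2 q = (\<Sum>k\<le>min m n. cc q m n k * z1^(m-k) * z2^(n-k))"
    unfolding H2_def by (intro sum.cong refl) (simp add: cc_def qb_def)
  also have "\<dots> = (\<Sum>k\<le>N. cc q m n k * z1^(m-k) * z2^(n-k))"
    using assms by (intro sum.mono_neutral_left) (auto simp: cc_zero)
  finally show ?thesis .
qed

lemma cc_rec:
  assumes nz: "\<And>j. qpoch q q j \<noteq> 0"
  shows "cc q m (Suc n) (Suc k) = cc q m n k * (q^m - q^k) + cc q m n (Suc k) * q^(Suc k)"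
proof -
  have ch: "Suc k choose 2 = (k choose 2) + k"
    by (simp add: numeral_2_eq_2)
  have "cc q m n k * (q^m - q^k) = (qb q m k * (q^m - q^k)) * qb q n k * (-1)^k * q^(k choose 2) * qpoch q q k"
    by (simp add: cc_def ac_simps)
  also have "\<dots> = - (q ^ k * (1 - q ^ Suc k) * qb q m (Suc k)) * qb q n k * (-1)^k * q^(k choose 2) * qpoch q q k"
    by (simp only: qb_ratio[OF nz])
  finally have 1: "cc q m n k * (q^m - q^k) = - (q ^ k * (1 - q ^ Suc k) * qb q m (Suc k)) * qb q n k * (-1)^k * q^(k choose 2) * qpoch q q k" .
  show ?thesis unfolding 1
    unfolding cc_def qb_pascal[OF nz] ch qpoch_Suc power_add
    by (simp add: algebra_simps)
qed

lemma raise1: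
  assumes nz: "\<And>j. qpoch q q j \<noteq> 0" and q0: "q \<noteq> 0"
  shows "z1 * H2 m (Suc n) z1 z2 q = q^m * (H2 m n z1 z2 q - (1 - z1*z2) * H2 m n ((1/q)*z1) z2 q)"
proof -
  define A where "A k = cc q m n k * (q^m - q^k) * z1^(m-k) * z2^(n-k)" for k
  define B where "B k = cc q m n k * q^k * z1^(Suc m-k) * z2^(Suc n-k)" for k
  have L: "z1 * H2 m (Suc n) z1 z2 q = (\<Sum>k\<le>Suc n. cc q m (Suc n) k * z1^(Suc m-k) * z2^(Suc n-k))"
    unfolding H2_cc[OF le_refl] sum_distrib_left
  proof (intro sum.cong refl)
    fix k assume "k \<in> {..Suc n}"
    show "z1 * (cc q m (Suc n) k * z1 ^ (m - k) * z2 ^ (Suc n - k)) = cc q m (Suc n) k * z1 ^ (Suc m - k) * z2 ^ (Suc n - k)"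
    proof (cases "k \<le> m")
      case True
      then have "Suc m - k = Suc (m - k)" by simp
      then show ?thesis by simp
    qed (simp add: cc_zero)
  qed
  also have "\<dots> = z1^Suc m * z2^Suc n + (\<Sum>k\<le>n. cc q m (Suc n) (Suc k) * z1^(m-k) * z2^(n-k))"
    by (subst sum.atMost_Suc_shift) (simp add: cc_0[OF nz])
  also have "\<dots> = z1^Suc m * z2^Suc n + (\<Sum>k\<le>n. A k + B (Suc k))"
    by (simp add: A_def B_def cc_rec[OF nz] algebra_simps)
  finally have L2: "z1 * H2 m (Suc n) z1 z2 q = z1^Suc m * z2^Suc n + (\<Sum>k\<le>n. A k + B (Suc k))" .
  have "q^m * (H2 m n z1 z2 q - (1 - z1*z2) * H2 m n ((1/q)*z1) z2 q)
      = (\<Sum>k\<le>Suc n. q^m * (cc q m n k * z1^(m-k) * z2^(n-k))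
          - q^m * ((1 - z1*z2) * (cc q m n k * ((1/q)*z1)^(m-k) * z2^(n-k))))"
    unfolding H2_cc[OF le_SucI[OF le_refl], of m n] sum_distrib_left sum_subtractf[symmetric] by (simp add: right_diff_distrib)
  also have "\<dots> = (\<Sum>k\<le>Suc n. A k + B k)"
  proof (intro sum.cong refl)
    fix k assume "k \<in> {..Suc n}"
    show "q^m * (cc q m n k * z1^(m-k) * z2^(n-k))
          - q^m * ((1 - z1*z2) * (cc q m n k * ((1/q)*z1)^(m-k) * z2^(n-k))) = A k + B k"
    proof (cases "k \<le> m \<and> k \<le> n")
      case True
      then obtain a b where m: "m = k + a" and n: "n = k + b" by (metis le_Suc_ex)
      have e1: "((1/q)*z1)^(m-k) = z1^a / q^a" by (simp add: m power_divide)
      have e2: "q^m = q^k * q^a" by (simp add: m power_add)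
      have "q^a \<noteq> 0" using q0 by simp
      then have "q^m * ((1 - z1*z2) * (cc q m n k * ((1/q)*z1)^(m-k) * z2^(n-k)))
          = q^k * ((1 - z1*z2) * (cc q m n k * z1^a * z2^b))"
        unfolding e1 e2 by (simp add: n field_simps)
      then have X: "q^m * ((1 - z1*z2) * (cc q m n k * ((1/q)*z1)^(m-k) * z2^(n-k))) = q^k * ((1 - z1*z2) * (cc q m n k * z1^a * z2^b))" .
      show ?thesis unfolding X unfolding A_def B_def m n
        by (simp add: Suc_diff_le algebra_simps)
    qed (simp add: cc_zero A_def B_def)
  qed
  also have "\<dots> = (\<Sum>k\<le>Suc n. A k) + (\<Sum>k\<le>Suc n. B k)" by (rule sum.distrib)
  also have "(\<Sum>k\<le>Suc n. A k) = (\<Sum>k\<le>n. A k)"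
    by (simp add: A_def cc_zero)
  also have "(\<Sum>k\<le>Suc n. B k) = z1^Suc m * z2^Suc n + (\<Sum>k\<le>n. B (Suc k))"
    by (subst sum.atMost_Suc_shift) (simp add: B_def cc_0[OF nz])
  finally show ?thesis unfolding L2 by (simp add: sum.distrib algebra_simps)
qed


lemma H2_sym: "H2 m n z1 z2 q = H2 n m z2 z1 q"
  unfolding H2_def by (intro sum.cong) (auto simp: min.commute ac_simps)

lemma qpoch_nz:
  fixes Q :: complex assumes "norm Q < 1" shows "qpoch Q Q j \<noteq> 0"
proof -
  have "1 - Q * Q ^ i \<noteq> 0" for i
  proof
    assume "1 - Q * Q ^ i = 0"
    then have "norm (Q * Q^i) = 1" by (metis eq_iff_diff_eq_0 norm_one)
    moreover have "norm (Q * Q^i) < 1"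
    proof -
      have "norm Q ^ i \<le> 1" by (rule power_le_one) (use assms in auto)
      then have "norm Q * norm Q ^ i \<le> norm Q" by (simp add: mult_left_le)
      then show ?thesis using assms by (simp add: norm_mult norm_power)
    qed
    ultimately show False by simp
  qed
  then show ?thesis by (simp add: qpoch_def)
qed

locale qsetting =
  fixes Q :: complex
  assumes Qn: "norm Q < 1" and Q0: "Q \<noteq> 0"
begin

definition F where "F w1 w2 = qpoch_inf (Q*w1*w2) Q"
abbreviation p where "p \<equiv> 1 / Q"

lemma nz: "qpoch Q Q j \<noteq> 0" using qpoch_nz[OF Qn] .

lemma p1: "1 - p \<noteq> 0"
proof
  assume "1 - p = 0"
  then have "Q = 1" using Q0 by (simp add: field_simps)
  then show False using Qn by simp
qed

lemma F_shift1: "F (p*w1) w2 = (1 - w1*w2) * F w1 w2"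
  unfolding F_def using qpoch_inf_shift[OF Qn, of "w1*w2"] Q0 by (simp add: ac_simps)

lemma F_shift2: "F w1 (p*w2) = (1 - w1*w2) * F w1 w2"
  unfolding F_def using qpoch_inf_shift[OF Qn, of "w1*w2"] Q0 by (simp add: ac_simps)

lemma F_sym: "F a b = F b a" by (simp add: F_def ac_simps)

lemma A0:
  assumes "z1 \<noteq> 0"
  shows "(F z1 z2 * H2 m n z1 z2 Q - F (p*z1) z2 * H2 m n (p*z1) z2 Q)/((1-p)*z1)
       = F z1 z2 * H2 m (Suc n) z1 z2 Q / (Q^m*(1-p))"
proof -
  have r: "z1 * H2 m (Suc n) z1 z2 Q = Q^m * (H2 m n z1 z2 Q - (1 - z1*z2) * H2 m n (p*z1) z2 Q)"
    by (rule raise1[OF nz Q0])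
  have "F z1 z2 * H2 m n z1 z2 Q - F (p*z1) z2 * H2 m n (p*z1) z2 Q
      = F z1 z2 * (H2 m n z1 z2 Q - (1 - z1*z2) * H2 m n (p*z1) z2 Q)"
    unfolding F_shift1 by (simp add: algebra_simps)
  also have "\<dots> = F z1 z2 * ((Q^m * (H2 m n z1 z2 Q - (1 - z1*z2) * H2 m n (p*z1) z2 Q)) / Q^m)"
    using Q0 by simp
  also have "\<dots> = F z1 z2 * (z1 * H2 m (Suc n) z1 z2 Q / Q^m)"
    unfolding r ..
  finally show ?thesis using assms p1 Q0 by (simp add: field_simps)
qed

lemma B0:
  assumes "z2 \<noteq> 0"
  shows "(F z1 z2 * H2 m n z1 z2 Q - F z1 (p*z2) * H2 m n z1 (p*z2) Q)/((1-p)*z2)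
       = F z1 z2 * H2 (Suc m) n z1 z2 Q / (Q^n*(1-p))"
  using A0[OF assms, of z1 n m] by (simp add: F_sym[of z1] F_sym[of _ "p*z2"] H2_sym[of m n] H2_sym[of "Suc m" n])

lemma C:
  assumes "z1 \<noteq> 0"
  shows "(D1 p ^^ n) (\<lambda>w1 w2. F w1 w2) z1 z2 = F z1 z2 * H2 0 n z1 z2 Q / (1-p)^n"
  using assms
proof (induction n arbitrary: z1 z2)
  case 0
  then show ?case by (simp add: H2_def qbinom_def qpoch_def binomial_eq_0)
next
  case (Suc n)
  have pz: "p * z1 \<noteq> 0" using Suc.prems Q0 by simp
  have "(D1 p ^^ Suc n) (\<lambda>w1 w2. F w1 w2) z1 z2
      = ((D1 p ^^ n) (\<lambda>w1 w2. F w1 w2) z1 z2 - (D1 p ^^ n) (\<lambda>w1 w2. F w1 w2) (p*z1) z2) / ((1-p)*z1)"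
    by (simp add: D1_def)
  also have "\<dots> = ((F z1 z2 * H2 0 n z1 z2 Q - F (p*z1) z2 * H2 0 n (p*z1) z2 Q)/((1-p)*z1)) / (1-p)^n"
    unfolding Suc.IH[OF Suc.prems] Suc.IH[OF pz] by (simp add: diff_divide_distrib ac_simps)
  also have "\<dots> = F z1 z2 * H2 0 (Suc n) z1 z2 Q / (1-p)^(Suc n)"
    unfolding A0[OF Suc.prems] using p1 by (simp add: field_simps)
  finally show ?case .
qed

lemma Dm:
  assumes "z1 \<noteq> 0" "z2 \<noteq> 0"
  shows "(D2 p ^^ m) ((D1 p ^^ n) (\<lambda>w1 w2. F w1 w2)) z1 z2
     = F z1 z2 * H2 m n z1 z2 Q / ((1-p)^(m+n) * Q^(m*n))"
  using assms(2)
proof (induction m arbitrary: z2)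
  case 0
  then show ?case using C[OF assms(1)] by simp
next
  case (Suc m)
  have pz: "p * z2 \<noteq> 0" using Suc.prems Q0 by simp
  have "(D2 p ^^ Suc m) ((D1 p ^^ n) (\<lambda>w1 w2. F w1 w2)) z1 z2
      = ((D2 p ^^ m) ((D1 p ^^ n) (\<lambda>w1 w2. F w1 w2)) z1 z2 - (D2 p ^^ m) ((D1 p ^^ n) (\<lambda>w1 w2. F w1 w2)) z1 (p*z2)) / ((1-p)*z2)"
    by (simp add: D2_def)
  also have "\<dots> = ((F z1 z2 * H2 m n z1 z2 Q - F z1 (p*z2) * H2 m n z1 (p*z2) Q)/((1-p)*z2)) / ((1-p)^(m+n) * Q^(m*n))"
    unfolding Suc.IH[OF Suc.prems] Suc.IH[OF pz] by (simp add: diff_divide_distrib ac_simps)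
  also have "\<dots> = F z1 z2 * H2 (Suc m) n z1 z2 Q / ((1-p)^(Suc m+n) * Q^(Suc m*n))"
    unfolding B0[OF Suc.prems] using p1 Q0 by (simp add: field_simps power_add)
  finally show ?case .
qed

end


theorem theorem3p2:
  fixes q :: real and m n :: nat and z1 z2 :: complex
  assumes "0 < q" "q < 1"
    and "z1 \<noteq> 0" "z2 \<noteq> 0"
    and "qpoch_inf (of_real q * z1 * z2) (of_real q) \<noteq> 0"
  shows "H2 m n z1 z2 (of_real q) =
           (1 - 1 / of_real q) ^ (m + n) * of_real q ^ (m * n)
           / qpoch_inf (of_real q * z1 * z2) (of_real q)
           * ((D2 (1 / of_real q) ^^ m) ((D1 (1 / of_real q) ^^ n)
                (\<lambda>w1 w2. qpoch_inf (of_real q * w1 * w2) (of_real q)))) z1 z2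
         \<and> H2 (Suc m) n z1 z2 (of_real q) =
           of_real q ^ n * (1 - 1 / of_real q)
           / qpoch_inf (of_real q * z1 * z2) (of_real q)
           * D2 (1 / of_real q)
               (\<lambda>w1 w2. qpoch_inf (of_real q * w1 * w2) (of_real q) * H2 m n w1 w2 (of_real q)) z1 z2
         \<and> H2 m (Suc n) z1 z2 (of_real q) =
           of_real q ^ m * (1 - 1 / of_real q)
           / qpoch_inf (of_real q * z1 * z2) (of_real q)
           * D1 (1 / of_real q)
               (\<lambda>w1 w2. qpoch_inf (of_real q * w1 * w2) (of_real q) * H2 m n w1 w2 (of_real q)) z1 z2"
proof -
  define Q where "Q = complex_of_real q"
  interpret qsetting Q
    by standard (use assms in \<open>auto simp: Q_def\<close>)
  have Fe: "(\<lambda>w1 w2. qpoch_inf (Q * w1 * w2) Q) = (\<lambda>w1 w2. F w1 w2)"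
    by (simp add: F_def)
  have Fz: "F z1 z2 \<noteq> 0"
  proof -
    have "F z1 z2 = qpoch_inf (Q*z1*z2) Q" by (rule F_def)
    then show ?thesis using assms(5) by (simp add: Q_def)
  qed
  have c1: "H2 m n z1 z2 Q = (1 - 1 / Q) ^ (m + n) * Q ^ (m * n) / qpoch_inf (Q * z1 * z2) Q
      * ((D2 (1 / Q) ^^ m) ((D1 (1 / Q) ^^ n) (\<lambda>w1 w2. qpoch_inf (Q * w1 * w2) Q))) z1 z2"
    unfolding Fe Dm[OF assms(3,4)] using Fz p1 Q0 by (simp add: F_def[symmetric])
  have c2: "H2 (Suc m) n z1 z2 Q = Q ^ n * (1 - 1 / Q) / qpoch_inf (Q * z1 * z2) Q
      * D2 (1 / Q) (\<lambda>w1 w2. qpoch_inf (Q * w1 * w2) Q * H2 m n w1 w2 Q) z1 z2"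
  proof -
    have "D2 (1 / Q) (\<lambda>w1 w2. qpoch_inf (Q * w1 * w2) Q * H2 m n w1 w2 Q) z1 z2
       = (F z1 z2 * H2 m n z1 z2 Q - F z1 (p*z2) * H2 m n z1 (p*z2) Q)/((1-p)*z2)"
      by (simp add: D2_def F_def)
    also have "\<dots> = F z1 z2 * H2 (Suc m) n z1 z2 Q / (Q^n*(1-p))" by (rule B0[OF assms(4)])
    finally show ?thesis using Fz p1 Q0 by (simp add: F_def[symmetric])
  qed
  have c3: "H2 m (Suc n) z1 z2 Q = Q ^ m * (1 - 1 / Q) / qpoch_inf (Q * z1 * z2) Q
      * D1 (1 / Q) (\<lambda>w1 w2. qpoch_inf (Q * w1 * w2) Q * H2 m n w1 w2 Q) z1 z2"
  proof -
    have "D1 (1 / Q) (\<lambda>w1 w2. qpoch_inf (Q * w1 * w2) Q * H2 m n w1 w2 Q) z1 z2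
       = (F z1 z2 * H2 m n z1 z2 Q - F (p*z1) z2 * H2 m n (p*z1) z2 Q)/((1-p)*z1)"
      by (simp add: D1_def F_def)
    also have "\<dots> = F z1 z2 * H2 m (Suc n) z1 z2 Q / (Q^m*(1-p))" by (rule A0[OF assms(3)])
    finally show ?thesis using Fz p1 Q0 by (simp add: F_def[symmetric])
  qed
  show ?thesis using c1 c2 c3 unfolding Q_def by blast
qed

end
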